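(* Let $\alpha>4$ and $0<N_1\le N_2$. Consider the two-player Random Access Game in which player $i\in\{1,2\}$ chooses $\Lambda_i\in[0,N_i]$ and receives payoff \[ U_i(\Lambda_1,\Lambda_2)=\sup_{\beta>0}\ \Lambda_i\log(1+\beta)\,e^{-(\Lambda_1+\Lambda_2)\beta^{2/\alpha}} . \] Let $\Lambda^*(\alpha/2)$ be the unique positive solution $L$ of \[ \frac{\alpha}{4}=\left(1+L^{\alpha/4}\right)\log\left(1+L^{-\alpha/4}\right). \] Then the game has a unique Nash equilibrium. If $\sqrt{\Lambda^*(\alpha/2)}<N_1$, this equilibrium is \[ (\Lambda_1^*,\Lambda_2^* )=\left(\sqrt{\Lambda^*(\alpha/2)},\sqrt{\Lambda^*(\alpha/2)}\right). \] Otherwise it is given by $\Lambda_1^*=N_1$ and $\Lambda_2^*=\min(x,N_2)$, where $x$ is the solution of \[ N_1=x\left(\frac{\alpha}{2\left(1+x^{\alpha/2}\right)\log\left(1+x^{-\alpha/2}\right)}-1\right). \]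
   Context: A Nash equilibrium is a pair $(\Lambda_1^*,\Lambda_2^* )\in[0,N_1]\times[0,N_2]$ such that $\Lambda_1^*$ maximizes $U_1(\cdot,\Lambda_2^* )$ over $[0,N_1]$ and $\Lambda_2^*$ maximizes $U_2(\Lambda_1^*,\cdot)$ over $[0,N_2]$. Here $\log$ is the natural logarithm. *)

theory Defs
  imports Complex_Main
begin

definition payoff :: "real \<Rightarrow> nat \<Rightarrow> real \<Rightarrow> real \<Rightarrow> real" where
  "payoff \<alpha> i L1 L2 =
     (SUP \<beta>\<in>{0<..}. (if i = 1 then L1 else L2) * ln (1 + \<beta>)
                     * exp (- (L1 + L2) * \<beta> powr (2 / \<alpha>)))"

definition is_nash :: "real \<Rightarrow> real \<Rightarrow> real \<Rightarrow> real \<times> real \<Rightarrow> bool" where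
  "is_nash \<alpha> N1 N2 p \<longleftrightarrow>
     fst p \<in> {0..N1} \<and> snd p \<in> {0..N2} \<and>
     (\<forall>L1\<in>{0..N1}. payoff \<alpha> 1 L1 (snd p) \<le> payoff \<alpha> 1 (fst p) (snd p)) \<and>
     (\<forall>L2\<in>{0..N2}. payoff \<alpha> 2 (fst p) L2 \<le> payoff \<alpha> 2 (fst p) (snd p))"

text \<open>Lambda^*(a) evaluated at a = alpha/2: the unique positive L with
  alpha/4 = (1 + L^(alpha/4)) log(1 + L^(-alpha/4)).\<close>
definition Lambda_star :: "real \<Rightarrow> real" where
  "Lambda_star \<alpha> = (THE L. L > 0 \<and>
     \<alpha> / 4 = (1 + L powr (\<alpha> / 4)) * ln (1 + L powr (- \<alpha> / 4)))"

definition x_sol :: "real \<Rightarrow> real \<Rightarrow> real" where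
  "x_sol \<alpha> N1 = (THE x. x > 0 \<and>
     N1 = x * (\<alpha> / (2 * (1 + x powr (\<alpha> / 2)) * ln (1 + x powr (- \<alpha> / 2))) - 1))"

end

theory Submission
  imports Defs
begin


definition Q :: "real \<Rightarrow> real" where "Q u = u / ((1+u) * ln (1+u))"

lemma r_deriv:
  assumes "x > 0"
  shows "((\<lambda>x. (1+x)*ln(1+x)/x) has_real_derivative (x - ln(1+x))/x^2) (at x)"
  using assms apply (auto intro!: derivative_eq_intros)
  apply (simp add: power2_eq_square algebra_simps)
  done

lemma r_mono:
  fixes u v :: real
  assumes "0 < u" "u < v"
  shows "(1+u)*ln(1+u)/u < (1+v)*ln(1+v)/v"
proof -
  obtain z where z: "u < z" "z < v"
    "(1+v)*ln(1+v)/v - (1+u)*ln(1+u)/u = (v - u) * ((z - ln(1+z))/z^2)"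
    using MVT2[OF assms(2), of "\<lambda>x. (1+x)*ln(1+x)/x" "\<lambda>x. (x - ln(1+x))/x^2"]
      r_deriv assms by force
  have "ln (1+z) < z" using ln_add_one_self_less_self z assms by auto
  hence "(z - ln(1+z))/z^2 > 0" using z assms by auto
  hence "(v - u) * ((z - ln(1+z))/z^2) > 0" using assms by (intro mult_pos_pos) auto
  thus ?thesis using z by linarith
qed

lemma Q_pos: "0 < u \<Longrightarrow> 0 < Q u"
  unfolding Q_def by (auto intro!: divide_pos_pos mult_pos_pos ln_gt_zero)

lemma Q_mono:
  fixes u v :: real
  assumes "0 < u" "u < v"
  shows "Q v < Q u"
proof -
  have ru: "(1+u)*ln(1+u)/u > 0" using assms by (auto intro!: ln_gt_zero)
  have "Q u = 1 / ((1+u)*ln(1+u)/u)" "Q v = 1 / ((1+v)*ln(1+v)/v)"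
    unfolding Q_def by auto
  moreover have "1 / ((1+v)*ln(1+v)/v) < 1 / ((1+u)*ln(1+u)/u)"
    using r_mono[OF assms] ru by (intro divide_strict_left_mono mult_pos_pos) auto
  ultimately show ?thesis by simp
qed

lemma Q_lt1: assumes "0 < u" shows "Q u < 1"
proof -
  have "ln (u+1) > u/(1+u)" using ln_add1_gt assms by auto
  hence "u < (1+u)*ln(1+u)" using assms by (simp add: field_simps add.commute)
  moreover have "(1+u)*ln(1+u) > 0" using assms by (auto intro!: ln_gt_zero)
  ultimately show ?thesis unfolding Q_def by simp
qed

lemma Q_ge: assumes "0 < u" shows "1/(1+u) \<le> Q u"
proof -
  have l: "ln (1+u) \<le> u" "ln(1+u) > 0" using ln_add_one_self_le_self assms by (auto intro!: ln_gt_zero)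
  have "1/(1+u) = u / ((1+u)*u)" using assms by simp
  also have "\<dots> \<le> Q u" unfolding Q_def using l assms
    by (intro divide_left_mono mult_left_mono mult_pos_pos) auto
  finally show ?thesis .
qed

lemma Q_le: assumes "0 < u" shows "Q u \<le> 1 / ln (1+u)"
proof -
  have l: "ln(1+u) > 0" using assms by (auto intro!: ln_gt_zero)
  have "Q u = (u/(1+u)) / ln(1+u)" unfolding Q_def by simp
  also have "\<dots> \<le> 1 / ln(1+u)" using l assms by (intro divide_right_mono) auto
  finally show ?thesis .
qed

lemma h_deriv:
  fixes a y :: real
  shows "((\<lambda>y. ln (ln (1 + exp (a*y)))) has_real_derivative a * Q (exp (a*y))) (at y)"
proof -
  have p: "ln (1 + exp (a*y)) > 0" by (auto intro!: ln_gt_zero)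
  show ?thesis
    using p apply (auto intro!: derivative_eq_intros simp: Q_def)
     apply (smt (verit) exp_gt_zero)
    apply (simp add: mult.commute)
    done
qed

lemma h_strict:
  fixes a y y0 :: real
  assumes "a > 0" "y \<noteq> y0"
  shows "ln (ln (1 + exp (a*y))) < ln (ln (1 + exp (a*y0))) + a * Q (exp (a*y0)) * (y - y0)"
proof (cases "y0 < y")
  case True
  obtain z where z: "y0 < z" "z < y"
    "ln (ln (1 + exp (a*y))) - ln (ln (1 + exp (a*y0))) = (y - y0) * (a * Q (exp (a*z)))"
    using MVT2[OF True, of "\<lambda>y. ln (ln (1 + exp (a*y)))" "\<lambda>y. a * Q (exp (a*y))"] h_deriv by blast
  have "Q (exp (a*z)) < Q (exp (a*y0))" using z assms by (intro Q_mono) auto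
  hence "a * Q (exp (a*z)) < a * Q (exp (a*y0))" using assms by simp
  hence "(y - y0) * (a * Q (exp (a*z))) < (y - y0) * (a * Q (exp (a*y0)))" using True by simp
  thus ?thesis using z by (simp add: algebra_simps)
next
  case False
  hence lt: "y < y0" using assms by simp
  obtain z where z: "y < z" "z < y0"
    "ln (ln (1 + exp (a*y0))) - ln (ln (1 + exp (a*y))) = (y0 - y) * (a * Q (exp (a*z)))"
    using MVT2[OF lt, of "\<lambda>y. ln (ln (1 + exp (a*y)))" "\<lambda>y. a * Q (exp (a*y))"] h_deriv by blast
  have "Q (exp (a*y0)) < Q (exp (a*z))" using z assms by (intro Q_mono) auto
  hence "a * Q (exp (a*y0)) < a * Q (exp (a*z))" using assms by simp
  hence "(y0 - y) * (a * Q (exp (a*y0))) < (y0 - y) * (a * Q (exp (a*z)))" using lt by simp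
  thus ?thesis using z by (simp add: algebra_simps)
qed

lemma H_strict:
  fixes a t t0 :: real
  assumes "a > 0" "t > 0" "t0 > 0" "t \<noteq> t0"
  shows "ln (ln (1 + t powr a)) < ln (ln (1 + t0 powr a)) + a * Q (t0 powr a) * (ln t - ln t0)"
proof -
  have "ln t \<noteq> ln t0" using assms by simp
  from h_strict[OF assms(1) this] show ?thesis using assms by (simp add: powr_def mult.commute)
qed

lemma H_le:
  fixes a t t0 :: real
  assumes "a > 0" "t > 0" "t0 > 0"
  shows "ln (ln (1 + t powr a)) \<le> ln (ln (1 + t0 powr a)) + a * Q (t0 powr a) * (ln t - ln t0)"
  using H_strict[OF assms] by (cases "t = t0") auto

definition F :: "real \<Rightarrow> real \<Rightarrow> real \<Rightarrow> real \<Rightarrow> real" where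
  "F a lam L t = L * ln (1 + t powr a) * exp (-(L+lam)*t)"

lemma F_pos: "0 < L \<Longrightarrow> 0 < t \<Longrightarrow> 0 < F a lam L t"
  unfolding F_def by (auto intro!: mult_pos_pos ln_gt_zero)

lemma ln_F: "0 < L \<Longrightarrow> 0 < t \<Longrightarrow> ln (F a lam L t) = ln L + ln (ln (1 + t powr a)) - (L+lam)*t"
proof -
  assume "0 < L" "0 < t"
  moreover have "ln (1 + t powr a) > 0" using \<open>0<t\<close> by (auto intro!: ln_gt_zero)
  ultimately show ?thesis unfolding F_def by (simp add: ln_mult algebra_simps)
qed

lemma tangent_ln:
  fixes w w0 :: real
  assumes "w > 0" "w0 > 0"
  shows "w0 * (ln w - ln w0) \<le> w - w0" "w \<noteq> w0 \<Longrightarrow> w0 * (ln w - ln w0) < w - w0"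
proof -
  have q: "w/w0 > 0" using assms by simp
  have l: "ln (w/w0) = ln w - ln w0" using assms by (simp add: ln_div)
  have "ln (w/w0) \<le> w/w0 - 1" using ln_le_minus_one[OF q] .
  hence "w0 * ln (w/w0) \<le> w0 * (w/w0 - 1)" using assms by (intro mult_left_mono) auto
  thus "w0 * (ln w - ln w0) \<le> w - w0" using assms l by (simp add: algebra_simps)
  assume ne: "w \<noteq> w0"
  have "w/w0 \<noteq> 1" using ne assms by simp
  hence "ln (w/w0) \<noteq> w/w0 - 1" using ln_eq_minus_one[OF q] by blast
  hence "ln (w/w0) < w/w0 - 1" using ln_le_minus_one[OF q] by simp
  hence "w0 * ln (w/w0) < w0 * (w/w0 - 1)" using assms by (intro mult_strict_left_mono) auto
  thus "w0 * (ln w - ln w0) < w - w0" using assms l by (simp add: algebra_simps)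
qed

lemma T_strict:
  fixes a lam L0 t0 L t :: real
  assumes "a > 0" "L0 > 0" "t0 > 0" "L > 0" "t > 0" "lam \<ge> 0" "(L,t) \<noteq> (L0,t0)"
  shows "ln (F a lam L t) < ln (F a lam L0 t0) + (1 - L0*t0)*(ln L - ln L0)
           + (a * Q (t0 powr a) - (L0+lam)*t0)*(ln t - ln t0)"
proof -
  define A where "A = a * Q (t0 powr a)"
  have e1: "L0*t0*(ln (L*t) - ln (L0*t0)) \<le> L*t - L0*t0" using tangent_ln(1)[of "L*t" "L0*t0"] assms by auto
  have e2: "lam*(t0*(ln t - ln t0)) \<le> lam*(t - t0)" using tangent_ln(1)[of t t0] assms
    by (intro mult_left_mono) auto
  hence e2: "lam*(t0*(ln t - ln t0)) \<le> lam*t - lam*t0" by (simp add: right_diff_distrib)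
  have lm: "ln (L*t) = ln L + ln t" "ln (L0*t0) = ln L0 + ln t0" using assms by (auto simp: ln_mult)
  have key: "ln (ln (1 + t powr a)) - L*t - lam*t < ln (ln (1 + t0 powr a)) + A*(ln t - ln t0)
       - L0*t0 - L0*t0*(ln (L*t) - ln (L0*t0)) - lam*t0 - lam*(t0*(ln t - ln t0))"
  proof (cases "t = t0")
    case True
    hence "L \<noteq> L0" using assms by auto
    hence "L*t \<noteq> L0*t0" using True assms by auto
    hence "L0*t0*(ln (L*t) - ln (L0*t0)) < L*t - L0*t0" using tangent_ln(2)[of "L*t" "L0*t0"] assms by auto
    thus ?thesis using e2 True by simp
  next
    case False
    have "ln (ln (1 + t powr a)) < ln (ln (1 + t0 powr a)) + A*(ln t - ln t0)"
      unfolding A_def using H_strict[OF assms(1,5,3) False] .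
    thus ?thesis using e1 e2 by linarith
  qed
  have "ln (F a lam L t) = ln L + ln (ln (1 + t powr a)) - L*t - lam*t"
    using ln_F[OF assms(4,5), where a=a and lam=lam] by (simp add: algebra_simps)
  moreover have "ln (F a lam L0 t0) = ln L0 + ln (ln (1 + t0 powr a)) - L0*t0 - lam*t0"
    using ln_F[OF assms(2,3), where a=a and lam=lam] by (simp add: algebra_simps)
  ultimately show ?thesis using key unfolding A_def[symmetric] lm by (simp add: algebra_simps)
qed

lemma T_le:
  fixes a lam L0 t0 L t :: real
  assumes "a > 0" "L0 > 0" "t0 > 0" "L > 0" "t > 0" "lam \<ge> 0"
  shows "ln (F a lam L t) \<le> ln (F a lam L0 t0) + (1 - L0*t0)*(ln L - ln L0)
           + (a * Q (t0 powr a) - (L0+lam)*t0)*(ln t - ln t0)"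
  using T_strict[OF assms] by (cases "(L,t) = (L0,t0)") auto

lemma QM:
  fixes a t t' :: real
  assumes "a > 0" "0 < t" "t < t'"
  shows "Q (t' powr a) < Q (t powr a)"
  using assms by (intro Q_mono powr_less_mono2) auto

lemma QM_le:
  fixes a t t' :: real
  assumes "a > 0" "0 < t" "t \<le> t'"
  shows "Q (t' powr a) \<le> Q (t powr a)"
  using QM[OF assms(1,2)] assms(3) by (cases "t = t'") (auto simp: less_eq_real_def)

lemma cont_g:
  fixes a c d t1 t2 :: real
  assumes "0 < t1"
  shows "continuous_on {t1..t2} (\<lambda>t. a * Q (t powr a) - c - d*t)"
proof -
  have "(1 + t powr a) * ln (1 + t powr a) \<noteq> 0" if "t \<in> {t1..t2}" for t
  proof -
    have "t > 0" using that assms by auto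
    hence "t powr a > 0" by simp
    hence "1 + t powr a > 0" "ln (1 + t powr a) > 0" by (auto intro!: ln_gt_zero simp del: powr_gt_zero)
    thus ?thesis by simp
  qed
  then show ?thesis unfolding Q_def using assms
    by (intro continuous_intros) (auto simp: order_less_le_trans)
qed

lemma root0:
  fixes a S :: real
  assumes "a > 0" "S > 0"
  shows "\<exists>t>0. a * Q (t powr a) = S * t"
proof -
  define t1 where "t1 = min 1 (a/(4*S))"
  define t2 where "t2 = 2*a/S"
  have t1p: "t1 > 0" "t1 \<le> 1" "t1 \<le> a/(4*S)" using assms unfolding t1_def by auto
  have t12: "t1 \<le> t2" using t1p(3) assms unfolding t2_def by (simp add: field_simps)
  have "t1 powr a \<le> 1" using t1p assms by (intro powr_le1) auto
  moreover have "0 \<le> t1 powr a" by simp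
  ultimately have "1/(1+t1 powr a) \<ge> 1/2" by (simp add: field_simps del: powr_ge_zero)
  hence "Q (t1 powr a) \<ge> 1/2" using Q_ge[of "t1 powr a"] t1p by auto
  hence g1: "a * Q (t1 powr a) \<ge> a/2" using assms by (simp add: field_simps)
  have "S * t1 \<le> a/4" using t1p(3) assms by (simp add: field_simps)
  hence g1': "a * Q (t1 powr a) - 0 - S*t1 \<ge> 0" using g1 assms by linarith
  have "Q (t2 powr a) < 1" using Q_lt1 assms unfolding t2_def by auto
  hence "a * Q (t2 powr a) < a" using assms by simp
  moreover have "S * t2 = 2*a" using assms unfolding t2_def by simp
  ultimately have g2: "a * Q (t2 powr a) - 0 - S*t2 \<le> 0" using assms by linarith
  obtain x where "t1 \<le> x" "x \<le> t2" "a * Q (x powr a) - 0 - S*x = 0"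
    using IVT2'[of "\<lambda>t. a * Q (t powr a) - 0 - S*t" t2 0 t1, OF g2 g1' t12 cont_g[OF t1p(1)]] by blast
  thus ?thesis using t1p by (intro exI[of _ x]) auto
qed

lemma root1:
  fixes a c d :: real
  assumes "1 \<le> c" "c < a" "d \<ge> 0"
  shows "\<exists>t>0. a * Q (t powr a) = c + d * t"
proof -
  define K where "K = c + 2*d + 1"
  have Kp: "K > 0" "c + 2*d < K" using assms unfolding K_def by auto
  define t1 where "t1 = min 1 ((a-c)/(2*K))"
  define t2 where "t2 = exp a + 1"
  have t1p: "t1 > 0" "t1 \<le> 1" "t1 \<le> (a-c)/(2*K)" using assms Kp unfolding t1_def by auto
  have t12: "t1 \<le> t2" using t1p(2) exp_gt_zero[of a] unfolding t2_def by linarith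
  have "t1 powr a \<le> t1" using t1p assms by (intro powr_le_one_le) auto
  hence "1/(1+t1) \<le> 1/(1+t1 powr a)" using t1p powr_ge_zero[of t1 a] by (intro divide_left_mono mult_pos_pos) (auto simp del: powr_ge_zero)
  hence "Q (t1 powr a) \<ge> 1/(1+t1)" using Q_ge[of "t1 powr a"] t1p by auto
  hence g1: "a * Q (t1 powr a) \<ge> a/(1+t1)" using assms by (simp add: divide_le_eq mult_le_cancel_left_pos)
  have "t1 * (c+2*d) \<le> t1 * K" using t1p Kp by (intro mult_left_mono) auto
  also have "\<dots> \<le> (a-c)/2" using t1p(3) Kp by (simp add: field_simps)
  finally have h1: "t1 * (c+2*d) \<le> (a-c)/2" .
  have "d*t1*t1 \<le> d*t1" using t1p assms by (simp add: mult_left_le)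
  hence "(1+t1)*(c + d*t1) \<le> c + t1*(c+2*d)" by (simp add: algebra_simps)
  also have "\<dots> < a"
  proof -
    have "(a - c)/2 < a - c" using assms by simp
    thus ?thesis using h1 by linarith
  qed
  finally have "(c + d*t1) * (1+t1) < a" by (simp add: mult.commute)
  hence "(c + d*t1) < a/(1+t1)" using t1p pos_less_divide_eq[of "1+t1" "c + d*t1" a] by simp
  hence g1': "a * Q (t1 powr a) - c - d*t1 \<ge> 0" using g1 by linarith
  have t2ge: "t2 \<ge> 1" unfolding t2_def using exp_gt_zero[of a] by linarith
  have "t2 powr 1 \<le> t2 powr a" using t2ge assms by (intro powr_mono) auto
  hence "t2 \<le> t2 powr a" using t2ge by simp
  hence u2: "t2 powr a > exp a" unfolding t2_def by linarith
  have u2p: "t2 powr a > 0" using u2 exp_gt_zero[of a] by linarith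
  have "ln (exp a) < ln (1 + t2 powr a)" using u2 u2p by (subst ln_less_cancel_iff) (auto simp del: powr_gt_zero)
  hence la: "ln (1 + t2 powr a) > a" by simp
  hence "a / ln (1 + t2 powr a) < 1" using assms by (simp add: divide_less_eq)
  moreover have "Q (t2 powr a) \<le> 1 / ln (1 + t2 powr a)" using Q_le u2p by blast
  hence "a * Q (t2 powr a) \<le> a * (1 / ln (1 + t2 powr a))" using assms by (intro mult_left_mono) auto
  ultimately have "a * Q (t2 powr a) < 1" by simp
  moreover have "d * t2 \<ge> 0" using assms t2ge by simp
  ultimately have g2: "a * Q (t2 powr a) - c - d*t2 \<le> 0" using assms by linarith
  obtain x where "t1 \<le> x" "x \<le> t2" "a * Q (x powr a) - c - d*x = 0"
    using IVT2'[of "\<lambda>t. a * Q (t powr a) - c - d*t" t2 0 t1, OF g2 g1' t12 cont_g[OF t1p(1)]] by blast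
  thus ?thesis using t1p by (intro exI[of _ x]) auto
qed


lemma dec:
  fixes a d t t' :: real
  assumes "a > 0" "d \<ge> 0" "0 < t" "t < t'"
  shows "a * Q (t' powr a) - d*t' < a * Q (t powr a) - d*t"
proof -
  have "a * Q (t' powr a) < a * Q (t powr a)" using QM[OF assms(1,3,4)] assms by simp
  moreover have "d*t \<le> d*t'" using assms by (intro mult_left_mono) auto
  ultimately show ?thesis by linarith
qed

lemma dec_le:
  fixes a d t t' :: real
  assumes "a > 0" "d \<ge> 0" "0 < t" "0 < t'" "a * Q (t powr a) - d*t \<le> a * Q (t' powr a) - d*t'"
  shows "t' \<le> t"
  using dec[OF assms(1,2,3), of t'] assms by (cases "t < t'") auto

lemma dec_lt:
  fixes a d t t' :: real
  assumes "a > 0" "d \<ge> 0" "0 < t" "0 < t'" "a * Q (t powr a) - d*t < a * Q (t' powr a) - d*t'"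
  shows "t' < t"
  using dec[OF assms(1,2,3), of t'] assms by (cases "t < t'") (auto simp: not_less order.order_iff_strict)

lemma dec_eq:
  fixes a d t t' :: real
  assumes "a > 0" "d \<ge> 0" "0 < t" "0 < t'" "a * Q (t powr a) - d*t = a * Q (t' powr a) - d*t'"
  shows "t' = t"
  using dec_le[OF assms(1-4)] dec_le[OF assms(1,2,4,3)] assms(5) by force

definition pay :: "real \<Rightarrow> real \<Rightarrow> real \<Rightarrow> real" where
  "pay a lam L = (SUP \<beta>\<in>{0<..}. L * ln (1 + \<beta>) * exp (- (L + lam) * \<beta> powr (1/a)))"

lemma pay0: "pay a lam 0 = 0"
  unfolding pay_def by simp

lemma pay_eval:
  fixes a lam L t :: real
  assumes "a > 0" "L > 0" "lam \<ge> 0" "t > 0" "a * Q (t powr a) = (L+lam)*t"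
  shows "pay a lam L = F a lam L t"
  unfolding pay_def
proof (rule cSup_eq_maximum)
  have "(t powr a) powr (1/a) = t" using assms by (simp add: powr_powr)
  hence "L * ln (1 + t powr a) * exp (- (L + lam) * (t powr a) powr (1/a)) = F a lam L t"
    unfolding F_def by simp
  moreover have "t powr a \<in> {0<..}" using assms by simp
  ultimately show "F a lam L t \<in> (\<lambda>\<beta>. L * ln (1 + \<beta>) * exp (- (L + lam) * \<beta> powr (1/a))) ` {0<..}"
    by (intro rev_image_eqI[of "t powr a"]) auto
next
  fix x assume "x \<in> (\<lambda>\<beta>. L * ln (1 + \<beta>) * exp (- (L + lam) * \<beta> powr (1/a))) ` {0<..}"
  then obtain b where b: "b > 0" "x = L * ln (1 + b) * exp (- (L + lam) * b powr (1/a))" by auto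
  define s where "s = b powr (1/a)"
  have sp: "s > 0" using b unfolding s_def by simp
  have "s powr a = b" using b assms unfolding s_def by (simp add: powr_powr)
  hence xs: "x = F a lam L s" using b unfolding F_def s_def by simp
  have "ln (F a lam L s) \<le> ln (F a lam L t) + (1 - L*t)*(ln L - ln L)
           + (a * Q (t powr a) - (L+lam)*t)*(ln s - ln t)"
    using T_le[OF assms(1,2,4,2) sp assms(3)] .
  hence "ln (F a lam L s) \<le> ln (F a lam L t)" using assms by simp
  hence "F a lam L s \<le> F a lam L t" using F_pos[OF assms(2) sp] F_pos[OF assms(2,4)] by simp
  thus "x \<le> F a lam L t" using xs by simp
qed

definition Cnd :: "real \<Rightarrow> real \<Rightarrow> real \<Rightarrow> real \<Rightarrow> real \<Rightarrow> bool" where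
  "Cnd a lam N L0 t0 \<longleftrightarrow> 0 < L0 \<and> L0 \<le> N \<and> 0 < t0 \<and> a * Q (t0 powr a) = (L0+lam)*t0
     \<and> L0*t0 \<le> 1 \<and> (L0*t0 = 1 \<or> L0 = N)"

lemma BR:
  fixes a lam N L0 t0 L :: real
  assumes "a > 0" "lam \<ge> 0" "Cnd a lam N L0 t0" "0 \<le> L" "L \<le> N" "L \<noteq> L0"
  shows "pay a lam L < pay a lam L0"
proof -
  have c: "0 < L0" "L0 \<le> N" "0 < t0" "a * Q (t0 powr a) = (L0+lam)*t0" "L0*t0 \<le> 1" "L0*t0 = 1 \<or> L0 = N"
    using assms(3) unfolding Cnd_def by auto
  have p0: "pay a lam L0 = F a lam L0 t0" using pay_eval[OF assms(1) c(1) assms(2) c(3,4)] .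
  show ?thesis
  proof (cases "L = 0")
    case True
    thus ?thesis using p0 pay0 F_pos[OF c(1,3)] by simp
  next
    case False
    hence Lp: "L > 0" using assms by simp
    obtain tL where tL: "tL > 0" "a * Q (tL powr a) = (L+lam)*tL" using root0[OF assms(1), of "L+lam"] Lp assms by auto
    have pL: "pay a lam L = F a lam L tL" using pay_eval[OF assms(1) Lp assms(2) tL] .
    have "(L,tL) \<noteq> (L0,t0)" using assms by simp
    from T_strict[OF assms(1) c(1,3) Lp tL(1) assms(2) this]
    have st: "ln (F a lam L tL) < ln (F a lam L0 t0) + (1 - L0*t0)*(ln L - ln L0)" using c(4) by simp
    have "(1 - L0*t0)*(ln L - ln L0) \<le> 0"
    proof (cases "L0*t0 = 1")
      case True thus ?thesis by simp
    next
      case False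
      hence "L0 = N" using c by simp
      hence "ln L \<le> ln L0" using Lp assms by simp
      thus ?thesis using c(5) by (intro mult_nonneg_nonpos) auto
    qed
    hence "ln (F a lam L tL) < ln (F a lam L0 t0)" using st by linarith
    hence "F a lam L tL < F a lam L0 t0" using F_pos[OF Lp tL(1)] F_pos[OF c(1,3)] by simp
    thus ?thesis using pL p0 by simp
  qed
qed

lemma Cnd_exists:
  fixes a lam N :: real
  assumes "a > 1" "lam \<ge> 0" "N > 0"
  shows "\<exists>L0 t0. Cnd a lam N L0 t0"
proof -
  obtain tA where tA: "tA > 0" "a * Q (tA powr a) = 1 + lam * tA" using root1[of 1 a lam] assms by auto
  show ?thesis
  proof (cases "1/tA \<le> N")
    case True
    have "Cnd a lam N (1/tA) tA" unfolding Cnd_def using True tA by (simp add: field_simps)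
    thus ?thesis by blast
  next
    case False
    hence NtA: "N * tA < 1" using tA by (simp add: field_simps)
    obtain tB where tB: "tB > 0" "a * Q (tB powr a) = (N+lam)*tB" using root0[of a "N+lam"] assms by auto
    have "N * tB \<le> 1"
    proof (rule ccontr)
      assume "\<not> N * tB \<le> 1"
      hence h: "N * tB > 1" by simp
      have "a * Q (tA powr a) - lam*tA < a * Q (tB powr a) - lam*tB" using tA tB h by (simp add: algebra_simps)
      hence "tB < tA" using dec_lt[of a lam tA tB] assms tA tB by simp
      hence "N * tB < N * tA" using assms by simp
      thus False using h NtA by simp
    qed
    hence "Cnd a lam N N tB" unfolding Cnd_def using tB assms by simp
    thus ?thesis by blast
  qed
qed

lemma BR_iff:
  fixes a lam N x :: real
  assumes "a > 1" "lam \<ge> 0" "N > 0" "0 \<le> x" "x \<le> N"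
  shows "(\<forall>L\<in>{0..N}. pay a lam L \<le> pay a lam x) \<longleftrightarrow> (\<exists>t. Cnd a lam N x t)"
proof
  assume h: "\<forall>L\<in>{0..N}. pay a lam L \<le> pay a lam x"
  obtain L0 t0 where c: "Cnd a lam N L0 t0" using Cnd_exists[OF assms(1-3)] by blast
  have "0 \<le> L0" "L0 \<le> N" using c unfolding Cnd_def by auto
  hence "pay a lam L0 \<le> pay a lam x" using h by auto
  hence "x = L0" using BR[of a lam N L0 t0 x] assms c by force
  thus "\<exists>t. Cnd a lam N x t" using c by blast
next
  assume "\<exists>t. Cnd a lam N x t"
  then obtain t where c: "Cnd a lam N x t" by blast
  show "\<forall>L\<in>{0..N}. pay a lam L \<le> pay a lam x"
  proof
    fix L assume "L \<in> {0..N}"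
    thus "pay a lam L \<le> pay a lam x" using BR[of a lam N x t L] assms c
      by (cases "L = x") (auto simp: less_imp_le)
  qed
qed



lemma payoff1: "payoff \<alpha> 1 L1 L2 = pay (\<alpha>/2) L2 L1"
  unfolding payoff_def pay_def by (simp add: add.commute)

lemma payoff2: "payoff \<alpha> 2 L1 L2 = pay (\<alpha>/2) L1 L2"
  unfolding payoff_def pay_def by (simp add: add.commute)

lemma nash_iff:
  fixes \<alpha> N1 N2 :: real
  assumes "\<alpha> > 2" "N1 > 0" "N2 > 0"
  shows "is_nash \<alpha> N1 N2 p \<longleftrightarrow> (\<exists>t. Cnd (\<alpha>/2) (snd p) N1 (fst p) t) \<and> (\<exists>t. Cnd (\<alpha>/2) (fst p) N2 (snd p) t)"
proof -
  have a1: "\<alpha>/2 > 1" using assms by simp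
  show ?thesis
  proof
    assume h: "is_nash \<alpha> N1 N2 p"
    hence r: "0 \<le> fst p" "fst p \<le> N1" "0 \<le> snd p" "snd p \<le> N2" unfolding is_nash_def by auto
    have "\<forall>L\<in>{0..N1}. pay (\<alpha>/2) (snd p) L \<le> pay (\<alpha>/2) (snd p) (fst p)"
      using h unfolding is_nash_def payoff1 by blast
    hence c1: "\<exists>t. Cnd (\<alpha>/2) (snd p) N1 (fst p) t" using BR_iff[OF a1 r(3) assms(2) r(1,2)] by blast
    have "\<forall>L\<in>{0..N2}. pay (\<alpha>/2) (fst p) L \<le> pay (\<alpha>/2) (fst p) (snd p)"
      using h unfolding is_nash_def payoff2 by blast
    hence c2: "\<exists>t. Cnd (\<alpha>/2) (fst p) N2 (snd p) t" using BR_iff[OF a1 r(1) assms(3) r(3,4)] by blast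
    show "(\<exists>t. Cnd (\<alpha>/2) (snd p) N1 (fst p) t) \<and> (\<exists>t. Cnd (\<alpha>/2) (fst p) N2 (snd p) t)"
      using c1 c2 by blast
  next
    assume h: "(\<exists>t. Cnd (\<alpha>/2) (snd p) N1 (fst p) t) \<and> (\<exists>t. Cnd (\<alpha>/2) (fst p) N2 (snd p) t)"
    hence r: "0 \<le> fst p" "fst p \<le> N1" "0 \<le> snd p" "snd p \<le> N2" unfolding Cnd_def by auto
    have "\<forall>L\<in>{0..N1}. pay (\<alpha>/2) (snd p) L \<le> pay (\<alpha>/2) (snd p) (fst p)"
      using h BR_iff[OF a1 r(3) assms(2) r(1,2)] by blast
    moreover have "\<forall>L\<in>{0..N2}. pay (\<alpha>/2) (fst p) L \<le> pay (\<alpha>/2) (fst p) (snd p)"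
      using h BR_iff[OF a1 r(1) assms(3) r(3,4)] by blast
    ultimately show "is_nash \<alpha> N1 N2 p" unfolding is_nash_def payoff1 payoff2 using r by auto
  qed
qed

lemma R_ident:
  fixes a v :: real
  assumes "v > 0"
  shows "(1 + 1/v) * ln (1 + v) = (1+v) * ln (1+v) / v"
    "a * Q v = a / ((1 + v) * ln (1 + v) / v)"
  using assms unfolding Q_def by (auto simp: field_simps)


lemma key_ls: fixes \<alpha> a L :: real assumes "a = \<alpha>/2" "a > 0" "L > 0"
  shows "\<alpha> / 4 = (1 + L powr (\<alpha> / 4)) * ln (1 + L powr (- \<alpha> / 4)) \<longleftrightarrow> a * Q (L powr (-\<alpha>/4)) = 2"
  proof -
    define v where "v = L powr (-\<alpha>/4)"
    have vp: "v > 0" using assms unfolding v_def by simp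
    have "L powr (-\<alpha>/4) = inverse (L powr (\<alpha>/4))" using powr_minus[of L "\<alpha>/4"] by simp
    hence Lv: "L powr (\<alpha>/4) = 1/v" unfolding v_def[symmetric] by (metis inverse_inverse_eq inverse_eq_divide)
    have e: "(1 + L powr (\<alpha> / 4)) * ln (1 + L powr (- \<alpha> / 4)) = (1+v) * ln (1+v) / v"
      unfolding v_def[symmetric] Lv using R_ident(1)[OF vp] .
    define R where "R = (1+v) * ln (1+v) / v"
    have Rp: "R > 0" using vp unfolding R_def by (auto intro!: ln_gt_zero)
    have aq: "a * Q v = a / R" using R_ident(2)[OF vp] unfolding R_def .
    have "a / R = 2 \<longleftrightarrow> a = 2 * R" using Rp by (simp add: divide_eq_eq)
    hence "a * Q v = 2 \<longleftrightarrow> R = a/2" unfolding aq by linarith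
    moreover have "\<alpha> / 4 = R \<longleftrightarrow> R = a/2" using assms by linarith
    ultimately have "\<alpha> / 4 = R \<longleftrightarrow> a * Q v = 2" by blast
    moreover have "\<alpha> / 4 = (1 + L powr (\<alpha> / 4)) * ln (1 + L powr (- \<alpha> / 4)) \<longleftrightarrow> \<alpha> / 4 = R"
      unfolding R_def by (simp only: e)
    ultimately show ?thesis unfolding v_def by blast
  qed
lemma lambda_star_eq:
  fixes \<alpha> ts :: real
  assumes "\<alpha> > 4" "ts > 0" "(\<alpha>/2) * Q (ts powr (\<alpha>/2)) = 2"
  shows "Lambda_star \<alpha> = ts powr (-2)"
proof -
  define a where "a = \<alpha>/2"
  have a0: "a > 0" using assms unfolding a_def by simp
  have key: "\<alpha> / 4 = (1 + L powr (\<alpha> / 4)) * ln (1 + L powr (- \<alpha> / 4)) \<longleftrightarrow> a * Q (L powr (-\<alpha>/4)) = 2"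
    if "L > 0" for L using key_ls[OF a_def a0 that] .
  have P: "ts powr (-2) > 0 \<and> \<alpha> / 4 = (1 + (ts powr (-2)) powr (\<alpha> / 4)) * ln (1 + (ts powr (-2)) powr (- \<alpha> / 4))"
  proof -
    have e: "(ts powr (-2)) powr (-\<alpha>/4) = ts powr a" unfolding a_def by (simp add: powr_powr)
    have "a * Q (ts powr a) = 2" using assms unfolding a_def by simp
    hence "a * Q ((ts powr (-2)) powr (-\<alpha>/4)) = 2" unfolding e .
    moreover have "ts powr (-2) > 0" using assms by simp
    ultimately show ?thesis using key[of "ts powr (-2)"] by blast
  qed
  show ?thesis unfolding Lambda_star_def
  proof (rule the_equality)
    show "ts powr (-2) > 0 \<and> \<alpha> / 4 = (1 + (ts powr (-2)) powr (\<alpha> / 4)) * ln (1 + (ts powr (-2)) powr (- \<alpha> / 4))"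
      using P .
  next
    fix L assume h: "L > 0 \<and> \<alpha> / 4 = (1 + L powr (\<alpha> / 4)) * ln (1 + L powr (- \<alpha> / 4))"
    hence q: "a * Q (L powr (-\<alpha>/4)) = 2" using key by blast
    define t' where "t' = L powr (-1/2)"
    have t'p: "t' > 0" using h unfolding t'_def by simp
    have e: "t' powr a = L powr (-\<alpha>/4)" unfolding t'_def a_def by (simp add: powr_powr)
    have "a * Q (ts powr a) = 2" using assms unfolding a_def by simp
    hence "a * Q (t' powr a) - 0 * t' = a * Q (ts powr a) - 0 * ts" using q unfolding e by simp
    hence "ts = t'" by (rule dec_eq[OF a0 order_refl t'p assms(2)])
    hence "ts powr (-2) = (L powr (-1/2)) powr (-2)" unfolding t'_def by simp
    also have "\<dots> = L" using h by (simp add: powr_powr)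
    finally show "L = ts powr (-2)" by simp
  qed
qed


lemma key_x:
  fixes \<alpha> a x :: real
  assumes "a = \<alpha>/2" "a > 0" "x > 0"
  shows "\<alpha> / (2 * (1 + x powr (\<alpha> / 2)) * ln (1 + x powr (- \<alpha> / 2))) = a * Q ((1/x) powr a)"
proof -
  define v where "v = (1/x) powr a"
  have vp: "v > 0" using assms unfolding v_def by simp
  have e1a: "x powr (- \<alpha> / 2) = inverse (x powr (\<alpha>/2))" using powr_minus[of x "\<alpha>/2"] by simp
  have e1b: "(1/x) powr (\<alpha>/2) = 1 / x powr (\<alpha>/2)" by (simp add: powr_divide)
  have e1: "x powr (- \<alpha> / 2) = v" unfolding v_def assms(1) using e1a e1b by (metis inverse_eq_divide)
  have e2: "x powr (\<alpha> / 2) = 1/v" unfolding v_def assms(1) using assms(3) by (simp add: powr_divide)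
  have lp: "ln (1+v) > 0" using vp by (auto intro!: ln_gt_zero)
  have "\<alpha> / (2 * (1 + 1/v) * ln (1 + v)) = a * Q v" unfolding Q_def assms(1) using vp lp by (simp add: field_simps)
  thus ?thesis unfolding e1 e2 v_def .
qed

lemma x_sol_eq:
  fixes \<alpha> N1 tau :: real
  assumes "\<alpha> > 2" "tau > 0" "(\<alpha>/2) * Q (tau powr (\<alpha>/2)) = 1 + N1 * tau" "N1 > 0"
  shows "x_sol \<alpha> N1 = 1/tau"
proof -
  define a where "a = \<alpha>/2"
  have a0: "a > 0" using assms unfolding a_def by simp
  have key: "\<alpha> / (2 * (1 + x powr (\<alpha> / 2)) * ln (1 + x powr (- \<alpha> / 2))) = a * Q ((1/x) powr a)"
    if "x > 0" for x using key_x[OF a_def a0 that] .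
  have aq: "a * Q (tau powr a) = 1 + N1 * tau" using assms unfolding a_def by simp
  show ?thesis unfolding x_sol_def
  proof (rule the_equality)
    have "N1 = (1/tau) * (a * Q (tau powr a) - 1)" using aq assms(2) by (simp add: field_simps)
    moreover have "1/(1/tau) = tau" by simp
    ultimately show "1/tau > 0 \<and> N1 = (1/tau) * (\<alpha> / (2 * (1 + (1/tau) powr (\<alpha> / 2)) * ln (1 + (1/tau) powr (- \<alpha> / 2))) - 1)"
      using key[of "1/tau"] assms(2) by simp
  next
    fix x assume h: "x > 0 \<and> N1 = x * (\<alpha> / (2 * (1 + x powr (\<alpha> / 2)) * ln (1 + x powr (- \<alpha> / 2))) - 1)"
    hence "N1 = x * (a * Q ((1/x) powr a) - 1)" using key by auto
    hence "a * Q ((1/x) powr a) = 1 + N1 * (1/x)" using h by (simp add: field_simps)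
    hence "a * Q ((1/x) powr a) - N1 * (1/x) = a * Q (tau powr a) - N1 * tau" using aq by simp
    moreover have "N1 \<ge> 0" using assms by simp
    moreover have "1/x > 0" using h by simp
    ultimately have "tau = 1/x" using dec_eq[OF a0, of N1 "1/x" tau] assms(2) by simp
    thus "x = 1/tau" using h by simp
  qed
qed


theorem theorem5:
  fixes \<alpha> N1 N2 :: real
  assumes "\<alpha> > 4" and "0 < N1" and "N1 \<le> N2"
  shows "(\<exists>!p. is_nash \<alpha> N1 N2 p) \<and>
         (if sqrt (Lambda_star \<alpha>) < N1
          then is_nash \<alpha> N1 N2 (sqrt (Lambda_star \<alpha>), sqrt (Lambda_star \<alpha>))
          else is_nash \<alpha> N1 N2 (N1, min (x_sol \<alpha> N1) N2))"
proof -
  define a where "a = \<alpha>/2"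
  have a2: "a > 2" using assms(1) unfolding a_def by simp
  hence a0: "a > 0" "a > 1" by auto
  have N2p: "N2 > 0" using assms by simp
  have N1nn: "N1 \<ge> 0" using assms by simp
  obtain ts where ts0: "ts > 0" "a * Q (ts powr a) = 2 + 0 * ts" using root1[of 2 a 0] a2 by auto
  have ts: "ts > 0" "a * Q (ts powr a) = 2" using ts0 by auto
  define s where "s = 1/ts"
  have sp: "s > 0" and sts: "s * ts = 1" using ts unfolding s_def by auto
  have LS: "sqrt (Lambda_star \<alpha>) = s"
  proof -
    have "Lambda_star \<alpha> = ts powr (-2)" using lambda_star_eq[OF assms(1) ts(1)] ts(2) unfolding a_def by simp
    moreover have "sqrt (ts powr (-2)) = (ts powr (-2)) powr (1/2)" by (simp add: powr_half_sqrt)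
    moreover have "(ts powr (-2)) powr (1/2) = ts powr (-1)" by (simp add: powr_powr)
    moreover have "ts powr (-1) = s" unfolding s_def using ts(1) by (simp add: powr_minus divide_inverse)
    ultimately show ?thesis by simp
  qed
  obtain tau where tau: "tau > 0" "a * Q (tau powr a) = 1 + N1 * tau" using root1[of 1 a N1] a2 assms by auto
  have XS: "x_sol \<alpha> N1 = 1/tau" using x_sol_eq[OF _ tau(1) _ assms(2)] tau assms(1) unfolding a_def by simp
  define x where "x = 1/tau"
  have xp: "x > 0" "x*tau = 1" using tau unfolding x_def by auto
  have NI: "is_nash \<alpha> N1 N2 p \<longleftrightarrow> (\<exists>t. Cnd a (snd p) N1 (fst p) t) \<and> (\<exists>t. Cnd a (fst p) N2 (snd p) t)" for p
    using nash_iff[of \<alpha> N1 N2 p] assms N2p unfolding a_def by simp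
  define ps where "ps = (if s < N1 then (s,s) else (N1, min x N2))"
  have NEp: "is_nash \<alpha> N1 N2 ps"
  proof (cases "s < N1")
    case True
    have e: "(s+s)*ts = 2" using sts by (simp add: distrib_right)
    have "Cnd a s N1 s ts" unfolding Cnd_def using True sp ts sts e by simp
    moreover have "Cnd a s N2 s ts" unfolding Cnd_def using True sp ts sts e assms(3) by simp
    ultimately show ?thesis unfolding NI ps_def using True by auto
  next
    case False
    have Ntau: "N1 * tau \<le> 1"
    proof (rule ccontr)
      assume c: "\<not> N1*tau \<le> 1"
      hence "a*Q(ts powr a) - 0*ts < a*Q(tau powr a) - 0*tau" using ts tau by simp
      hence "tau < ts" using dec_lt[OF a0(1) order_refl ts(1) tau(1)] by simp
      hence "N1*tau < N1*ts" using assms by simp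
      moreover have "N1*ts \<le> s*ts" using False ts by (intro mult_right_mono) auto
      ultimately show False using sts c by simp
    qed
    show ?thesis
    proof (cases "x \<le> N2")
      case True
      have e: "(N1+x)*tau = N1*tau + 1" "(x+N1)*tau = N1*tau + 1" using xp by (simp_all add: distrib_right)
      have "Cnd a x N1 N1 tau" unfolding Cnd_def using assms tau Ntau e by simp
      moreover have "Cnd a N1 N2 x tau" unfolding Cnd_def using True xp tau e by simp
      ultimately show ?thesis unfolding NI ps_def using False True by auto
    next
      case xN2: False
      obtain tB where tB: "tB > 0" "a * Q (tB powr a) = (N1+N2)*tB" using root0[OF a0(1), of "N1+N2"] assms by auto
      have N2tau: "N2 * tau < 1" using xN2 xp tau using mult_strict_right_mono[of N2 x tau] by simp
      have NB: "N2*tB \<le> 1"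
      proof (rule ccontr)
        assume c: "\<not> N2*tB \<le> 1"
        have "a*Q(tau powr a) - N1*tau < a*Q(tB powr a) - N1*tB" using c tau tB by (simp add: algebra_simps)
        hence "tB < tau" using dec_lt[OF a0(1) N1nn tau(1) tB(1)] by simp
        hence "N2*tB < N2*tau" using N2p by simp
        thus False using c N2tau by simp
      qed
      have N1B: "N1*tB \<le> 1" using NB assms tB by (smt (verit) mult_right_mono)
      have "Cnd a N2 N1 N1 tB" unfolding Cnd_def using assms tB N1B by simp
      moreover have "Cnd a N1 N2 N2 tB" unfolding Cnd_def using N2p tB NB by (simp add: add.commute)
      ultimately show ?thesis unfolding NI ps_def using False xN2 by auto
    qed
  qed
  have U: "q = ps" if qn: "is_nash \<alpha> N1 N2 q" for q
  proof -
    obtain q1 q2 where q: "q = (q1,q2)" by force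
    obtain t t2 where c1: "Cnd a q2 N1 q1 t" and c2: "Cnd a q1 N2 q2 t2" using qn NI q by auto
    have c1': "0<q1" "q1 \<le> N1" "0<t" "a*Q(t powr a) = (q1+q2)*t" "q1*t \<le> 1" "q1*t = 1 \<or> q1 = N1"
      using c1 unfolding Cnd_def by auto
    have c2': "0<q2" "q2 \<le> N2" "0<t2" "a*Q(t2 powr a) = (q2+q1)*t2" "q2*t2 \<le> 1" "q2*t2 = 1 \<or> q2 = N2"
      using c2 unfolding Cnd_def by auto
    have "a*Q(t powr a) - (q1+q2)*t = a*Q(t2 powr a) - (q1+q2)*t2" using c1' c2' by (simp add: add.commute)
    moreover have qnn: "q1 + q2 \<ge> 0" using c1' c2' by simp
    ultimately have tt: "t2 = t" using dec_eq[OF a0(1) qnn c1'(3) c2'(3)] by simp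
    have c2'': "q2*t \<le> 1" "q2*t = 1 \<or> q2 = N2" using c2' tt by auto
    show ?thesis
    proof (cases "q2*t = 1")
      case q2t: True
      show ?thesis
      proof (cases "q1*t = 1")
        case q1t: True
        have "a*Q(t powr a) = 2" using c1'(4) q1t q2t by (simp add: distrib_right)
        hence "a*Q(t powr a) - 0*t = a*Q(ts powr a) - 0*ts" using ts by simp
        hence tts: "ts = t" by (rule dec_eq[OF a0(1) order_refl c1'(3) ts(1)])
        have q1s: "q1 = s" using q1t sts tts ts by (metis mult_cancel_right order_less_irrefl)
        have q2s: "q2 = s" using q2t sts tts ts by (metis mult_cancel_right order_less_irrefl)
        show ?thesis
        proof (cases "s < N1")
          case True thus ?thesis unfolding ps_def q q1s q2s by simp
        next
          case False
          hence sN: "s = N1" using q1s c1'(2) by simp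
          have "a*Q(ts powr a) - N1*ts = a*Q(tau powr a) - N1*tau" using ts tau sts sN by simp
          hence "tau = ts" using dec_eq[OF a0(1) N1nn ts(1) tau(1)] by simp
          hence "x = s" unfolding x_def s_def by simp
          thus ?thesis unfolding ps_def q q1s q2s using False sN assms(3) by simp
        qed
      next
        case q1t: False
        hence q1N: "q1 = N1" using c1' by simp
        have "a*Q(t powr a) - N1*t = a*Q(tau powr a) - N1*tau" using c1'(4) q2t tau q1N by (simp add: distrib_right)
        hence "tau = t" using dec_eq[OF a0(1) N1nn c1'(3) tau(1)] by simp
        hence q2x: "q2 = x" using q2t xp c1'(3) by (metis mult.commute mult_cancel_right order_less_irrefl)
        have ns: "\<not> s < N1"
        proof
          assume sN: "s < N1"
          have "a*Q(t powr a) - 0*t \<le> a*Q(ts powr a) - 0*ts" using c1'(4) c1'(5) q2t ts q1N by (simp add: distrib_right)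
          hence "ts \<le> t" using dec_le[OF a0(1) order_refl c1'(3) ts(1)] by simp
          hence "N1*ts \<le> N1*t" using assms by simp
          hence "N1*ts \<le> s*ts" using c1'(5) q1N sts by simp
          hence "N1 \<le> s" using ts by simp
          thus False using sN by simp
        qed
        thus ?thesis unfolding ps_def q q1N q2x using c2'(2) q2x by simp
      qed
    next
      case q2t: False
      hence q2N: "q2 = N2" using c2'' by simp
      have N2t: "N2*t < 1" using c2'' q2t q2N by simp
      have "q1*t \<le> N2*t" using c1' assms by (intro mult_right_mono) auto
      hence "q1*t \<noteq> 1" using N2t by simp
      hence q1N: "q1 = N1" using c1' by simp
      have aq: "a*Q(t powr a) = (N1+N2)*t" using c1'(4) q1N q2N by simp
      have "(N1+N2)*t \<le> 2*(N2*t)" using assms c1'(3) by (simp add: algebra_simps)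
      hence "a*Q(t powr a) - 0*t < a*Q(ts powr a) - 0*ts" using aq N2t ts by simp
      hence "ts < t" using dec_lt[OF a0(1) order_refl c1'(3) ts(1)] by simp
      hence "N2*ts < N2*t" using N2p by simp
      hence "N2*ts < s*ts" using N2t sts by simp
      hence "N2 < s" using ts by simp
      hence ns: "\<not> s < N1" using assms by simp
      have "a*Q(t powr a) - N1*t < a*Q(tau powr a) - N1*tau" using aq N2t tau by (simp add: algebra_simps)
      hence "tau < t" using dec_lt[OF a0(1) N1nn c1'(3) tau(1)] by simp
      hence "N2*tau < N2*t" using N2p by simp
      hence "N2*tau < x*tau" using N2t xp by simp
      hence "N2 < x" using tau by simp
      thus ?thesis unfolding ps_def q q1N q2N using ns by simp
    qed
  qed
  have ex1: "\<exists>!p. is_nash \<alpha> N1 N2 p" using NEp U by blast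
  show ?thesis using ex1 NEp unfolding LS XS x_def[symmetric] ps_def by (cases "s < N1") auto
qed

end
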